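(* For each integer $d\ge0$, let $T_d(t)=\sum_{i=0}^dT(d,i)t^i$ be the unique polynomial of degree $d$ satisfying $T(d,i)=T(d,d-i)$, such that for $0\le i\le d/2$, $T(d,i)$ is the coefficient of $t^i$ in $\sum_{j=0}^d\binom{d+1}{j}2^jt^j(1-t)^{d-j}$. Set $T(d,i)=0$ for $i<0$. Then for $0\le i<d/2$, $$T(d,i)=T(d-1,i)+T(d-1,i-1),$$ and for $d=2k$ with $k\ge1$, $$T(2k,k)=2T(2k-1,k-1)+\binom{2k}{k}.$$ Consequently $T(d,i)=\sum_{j=0}^i\binom{d+1}{j}$ for $0\le i\le d/2$. *)

theory Defs
  imports "HOL-Computational_Algebra.Polynomial"
begin

definition Ppoly :: "nat \<Rightarrow> int poly" where
  "Ppoly d = (\<Sum>j\<le>d. smult (of_nat ((d+1) choose j) * 2^j) ([:0,1:]^j * [:1,-1:]^(d-j)))"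

text \<open>T(d,i): for 0 <= i <= d/2 the coefficient of t^i in Ppoly d; for d/2 < i <= d
  defined by the symmetry T(d,i) = T(d,d-i); zero for i < 0 (and i > d, since T_d has degree d).\<close>
definition T :: "nat \<Rightarrow> int \<Rightarrow> int" where
  "T d i = (if i < 0 \<or> i > int d then 0
            else if 2 * i \<le> int d then coeff (Ppoly d) (nat i)
            else coeff (Ppoly d) (d - nat i))"

end

theory Submission
  imports Defs
begin

lemma key: "Ppoly d * [:1,-1:] = [:1,1:]^(Suc d) - [:0,2:]^(Suc d)"
proof -
  have "[:1,1:]^(Suc d) = ([:0,2:] + [:1,-1:] :: int poly)^(Suc d)" by simp
  also have "\<dots> = (\<Sum>k\<le>Suc d. of_nat (Suc d choose k) * [:0,2:]^k * [:1,-1:]^(Suc d - k))"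
    by (rule binomial_ring)
  also have "\<dots> = (\<Sum>k\<le>d. of_nat (Suc d choose k) * [:0,2:]^k * [:1,-1:]^(Suc d - k)) + [:0,2:]^Suc d"
    by (simp add: sum.atMost_Suc)
  also have "(\<Sum>k\<le>d. of_nat (Suc d choose k) * [:0,2:]^k * [:1,-1:]^(Suc d - k)) = Ppoly d * [:1,-1:]"
    unfolding Ppoly_def sum_distrib_right
  proof (rule sum.cong)
    fix k assume "k \<in> {..d}"
    then have k: "Suc d - k = Suc (d - k)" by auto
    have s: "[:0,2::int:] = smult (2::int) [:0,1:]" by simp
    show "of_nat (Suc d choose k) * [:0,2::int:]^k * [:1,-1:]^(Suc d - k) =
      smult (of_nat ((d+1) choose k) * 2^k) ([:0,1:]^k * [:1,-1:]^(d-k)) * [:1,-1:]"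
      proof -
      have c: "[:c:] * p = smult c p" for c :: int and p by simp
      show ?thesis unfolding k s smult_power of_nat_poly power_Suc2
        by (simp only: c mult_smult_left mult_smult_right smult_smult mult.assoc mult.commute[of "2^k"] Suc_eq_plus1)
    qed
  qed simp
  finally show ?thesis by simp
qed

lemma coeff_div1: "coeff (p * [:1,-1:]) 0 = coeff p 0"
  "coeff (p * [:1,-1:]) (Suc n) = coeff p (Suc n) - coeff (p::int poly) n"
  by (simp_all add: coeff_pCons)

lemma partial: "coeff (p::int poly) i = (\<Sum>j\<le>i. coeff (p * [:1,-1:]) j)"
  by (induction i) (simp_all add: coeff_div1)

lemma coeffP: "i \<le> d \<Longrightarrow> coeff (Ppoly d) i = (\<Sum>j=0..i. int ((d + 1) choose j))"
proof -
  assume i: "i \<le> d"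
  have "coeff (Ppoly d) i = (\<Sum>j\<le>i. coeff ([:1,1:]^(Suc d) - [:0,2:]^(Suc d)) j)"
    by (simp only: partial[of _ i] key)
  also have "\<dots> = (\<Sum>j\<le>i. int ((d + 1) choose j))"
  proof (rule sum.cong)
    fix j assume "j \<in> {..i}"
    then have j: "j \<le> Suc d" "j \<noteq> Suc d" using i by auto
    show "coeff ([:1,1:]^(Suc d) - [:0,2:]^(Suc d)) j = int ((d + 1) choose j)"
      using j unfolding coeff_diff coeff_linear_poly_power[OF j(1)] by simp
  qed simp
  finally show ?thesis by (simp add: atLeast0AtMost)
qed

lemma Tsum: "2 * i \<le> d \<Longrightarrow> T d (int i) = (\<Sum>j = 0..i. int ((d + 1) choose j))"
  unfolding T_def by (simp add: coeffP)

lemma pascal_sum: "(\<Sum>j\<le>Suc i. int (Suc n choose j)) = (\<Sum>j\<le>Suc i. int (n choose j)) + (\<Sum>j\<le>i. int (n choose j))"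
proof (induction i)
  case 0
  then show ?case by simp
next
  case (Suc i)
  have "(\<Sum>j\<le>Suc (Suc i). int (Suc n choose j)) = (\<Sum>j\<le>Suc i. int (Suc n choose j)) + int (Suc n choose Suc (Suc i))"
    by simp
  also have "\<dots> = (\<Sum>j\<le>Suc i. int (n choose j)) + (\<Sum>j\<le>i. int (n choose j)) + int (n choose Suc (Suc i)) + int (n choose Suc i)"
    using Suc by simp
  finally show ?case by simp
qed

lemma Tsum': "2 * i \<le> d \<Longrightarrow> T d (int i) = (\<Sum>j\<le>i. int ((d + 1) choose j))"
  by (simp add: Tsum atLeast0AtMost)

theorem lemma11p2:
  shows "(\<forall>(d::nat) (i::nat). 2 * i < d \<longrightarrow>
            T d (int i) = T (d - 1) (int i) + T (d - 1) (int i - 1))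
       \<and> (\<forall>k::nat. k \<ge> 1 \<longrightarrow>
            T (2 * k) (int k) = 2 * T (2 * k - 1) (int k - 1) + int ((2 * k) choose k))
       \<and> (\<forall>(d::nat) (i::nat). 2 * i \<le> d \<longrightarrow>
            T d (int i) = (\<Sum>j = 0..i. int ((d + 1) choose j)))"
proof (intro conjI allI impI)
  fix d i :: nat assume h: "2 * i \<le> d"
  then show "T d (int i) = (\<Sum>j = 0..i. int ((d + 1) choose j))" by (rule Tsum)
next
  fix d i :: nat assume h: "2 * i < d"
  then obtain m where d: "d = Suc m" by (cases d) auto
  show "T d (int i) = T (d - 1) (int i) + T (d - 1) (int i - 1)"
  proof (cases i)
    case 0
    have "T m (-1) = 0" by (simp add: T_def)
    then show ?thesis using d h 0 by (simp add: Tsum'[of 0, simplified])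
  next
    case (Suc i')
    have e: "int i - 1 = int i'" using Suc by simp
    have 1: "T (Suc m) (int (Suc i')) = (\<Sum>j\<le>Suc i'. int (Suc (Suc m) choose j))"
      by (rule Tsum'[simplified]) (use h d Suc in simp)
    have 2: "T m (int (Suc i')) = (\<Sum>j\<le>Suc i'. int (Suc m choose j))"
      by (rule Tsum'[simplified]) (use h d Suc in simp)
    have 3: "T m (int i') = (\<Sum>j\<le>i'. int (Suc m choose j))"
      by (rule Tsum'[simplified]) (use h d Suc in simp)
    show ?thesis unfolding e unfolding d Suc diff_Suc_1 1 2 3 by (rule pascal_sum)
  qed
next
  fix k :: nat assume "k \<ge> 1"
  then obtain k' where k: "k = Suc k'" by (cases k) auto
  have e: "int k - 1 = int k'" "2 * k - 1 = Suc (2 * k')" using k by auto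
  have a: "T (2 * k) (int k) = (\<Sum>j\<le>Suc k'. int (Suc (2*k) choose j))"
    unfolding k by (rule Tsum'[simplified]) simp
  have b: "T (2 * k - 1) (int k - 1) = (\<Sum>j\<le>k'. int (2*k choose j))"
    unfolding e by (subst Tsum') (use k in auto)
  show "T (2 * k) (int k) = 2 * T (2 * k - 1) (int k - 1) + int ((2 * k) choose k)"
  proof -
    have "(\<Sum>j\<le>Suc k'. int (Suc (2*k) choose j)) = 2 * (\<Sum>j\<le>k'. int (2*k choose j)) + int (2*k choose Suc k')"
      unfolding pascal_sum sum.atMost_Suc by simp
    then show ?thesis unfolding a b using k by simp
  qed
qed

end
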